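(* Let $N\in\mathbb{N}$ be odd and either prime or divisible by at least two distinct primes. Let $b\in\mathbb{Z}$ and $f\in\mathbb{Z}[X]$ with $f(b)=N$, let $d:=\deg f$, and suppose $d$ is smaller than $q:=\max\{q'\text{ prime}:q'\mid N\}$ and $\gcd(\mathrm{lc}(f),N)=1$, where $\mathrm{lc}(f)$ is the leading coefficient of $f$. Then \[N\text{ is prime}\iff \forall x\in\{0,\dots,N-1\}:\ f(x)^{N-1}\bmod N\in\{0,1\}.\] *)

theory Defs
  imports "HOL-Computational_Algebra.Polynomial" "HOL-Computational_Algebra.Primes"
begin

end

theory Submission
  imports Defs "HOL-Number_Theory.Number_Theory"
begin

lemma poly_cong_int:
  fixes f :: "int poly"
  assumes "[x = y] (mod m)"
  shows "[poly f x = poly f y] (mod m)"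
proof (induction f)
  case (pCons a p)
  then show ?case using assms by (simp add: cong_add cong_mult)
qed simp

lemma roots_mod_card:
  fixes q :: nat
  assumes q: "prime q"
  shows "\<not> int q dvd lead_coeff g \<Longrightarrow> card {r\<in>{0..<q}. int q dvd poly g (int r)} \<le> degree g"
proof (induction "degree g" arbitrary: g)
  case 0
  obtain c where g: "g = [:c:]" using 0(1)[symmetric] degree_eq_zeroE by blast
  then show ?case using 0 by simp
next
  case (Suc n)
  show ?case
  proof (cases "{r\<in>{0..<q}. int q dvd poly g (int r)} = {}")
    case True then show ?thesis by (simp only: card.empty)
  next
    case False
    then obtain r0 where r0: "r0 < q" "int q dvd poly g (int r0)" by auto
    define h where "h = synthetic_div g (int r0)"
    have geq: "g = [:- int r0, 1:] * h + [:poly g (int r0):]"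
      unfolding h_def using synthetic_div_correct'[of "int r0" g] by simp
    have dh: "degree h = n" unfolding h_def using Suc(2) by (simp add: degree_synthetic_div)
    have hnz: "h \<noteq> 0" using geq Suc(2) by (metis add_0 degree_pCons_0 mult_zero_right nat.distinct(1))
    have "lead_coeff g = Polynomial.coeff ([:- int r0, 1:] * h) (Suc n)"
      using geq Suc(2) by (metis coeff_add coeff_pCons_Suc coeff_pCons_0 add_0_right pCons_0_0 coeff_0)
    also have "\<dots> = lead_coeff h" using dh hnz
      by (metis degree_mult_eq lead_coeff_mult degree_linear_power one_neq_zero pCons_eq_0_iff plus_1_eq_Suc lead_coeff_pCons(1) mult_1 pCons_one power_one_right)
    finally have lc: "lead_coeff h = lead_coeff g" by simp
    have IH: "card {r\<in>{0..<q}. int q dvd poly h (int r)} \<le> n"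
      using Suc(1)[of h] dh lc Suc(3) by simp
    have sub: "{r\<in>{0..<q}. int q dvd poly g (int r)} \<subseteq> insert r0 {r\<in>{0..<q}. int q dvd poly h (int r)}"
    proof
      fix r assume r: "r \<in> {r\<in>{0..<q}. int q dvd poly g (int r)}"
      show "r \<in> insert r0 {r\<in>{0..<q}. int q dvd poly h (int r)}"
      proof (cases "r = r0")
        case False
        have pe: "poly g (int r) = (int r - int r0) * poly h (int r) + poly g (int r0)"
          by (subst geq) (simp add: poly_add algebra_simps)
        have "int q dvd (int r - int r0) * poly h (int r)"
          using r r0(2) pe by (metis add_diff_cancel_right' dvd_diff mem_Collect_eq)
        moreover have "\<not> int q dvd (int r - int r0)"
        proof
          assume "int q dvd (int r - int r0)"
          then have "\<bar>int q\<bar> \<le> \<bar>int r - int r0\<bar>" using False by (intro dvd_imp_le_int) auto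
          then show False using r r0 by auto
        qed
        moreover have "prime (int q)" using q by simp
        ultimately have "int q dvd poly h (int r)" using prime_dvd_mult_iff by blast
        then show ?thesis using r by auto
      qed simp
    qed
    have "card {r\<in>{0..<q}. int q dvd poly g (int r)} \<le> card (insert r0 {r\<in>{0..<q}. int q dvd poly h (int r)})"
      by (intro card_mono sub) auto
    also have "\<dots> \<le> Suc n" using IH by (simp add: card_insert_le_m1)
    finally show ?thesis using Suc(2) by simp
  qed
qed

theorem theorem5p1:
  fixes N :: nat and b :: int and f :: "int poly"
  assumes "odd N"
    and "prime N \<or> (\<exists>p1 p2. prime p1 \<and> prime p2 \<and> p1 \<noteq> p2 \<and> p1 dvd N \<and> p2 dvd N)"
    and "poly f b = int N"
    and "degree f < Max {q. prime q \<and> q dvd N}"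
    and "gcd (lead_coeff f) (int N) = 1"
  shows "prime N \<longleftrightarrow>
           (\<forall>x\<in>{0..N-1}. (poly f (int x)) ^ (N - 1) mod int N \<in> {0, 1})"
proof
  assume pN: "prime N"
  have N2: "N \<ge> 2" using pN prime_ge_2_nat by blast
  show "\<forall>x\<in>{0..N-1}. (poly f (int x)) ^ (N - 1) mod int N \<in> {0, 1}"
  proof
    fix x :: nat
    define y where "y = poly f (int x)"
    show "(poly f (int x)) ^ (N - 1) mod int N \<in> {0, 1}"
    proof (cases "int N dvd y")
      case True
      then have "int N dvd y ^ (N - 1)" using N2 dvd_trans[OF True dvd_power[of "N - 1" y]] by simp
      then show ?thesis unfolding y_def[symmetric] by simp
    next
      case False
      define a where "a = nat (y mod int N)"
      have ia: "int a = y mod int N" unfolding a_def using N2 by simp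
      have "\<not> N dvd a"
      proof
        assume "N dvd a"
        then have "int N dvd y mod int N" using ia by (metis of_nat_dvd_iff)
        then show False using False by (simp add: dvd_mod_iff)
      qed
      then have "[a ^ (N - 1) = 1] (mod N)" using fermat_theorem pN by blast
      then have "[int a ^ (N - 1) = 1] (mod int N)" by (metis cong_int_iff of_nat_1 of_nat_power)
      then have "(y mod int N) ^ (N - 1) mod int N = 1" using ia N2 unfolding cong_def by simp
      then have "y ^ (N - 1) mod int N = 1" by (simp add: power_mod)
      then show ?thesis unfolding y_def by simp
    qed
  qed
next
  assume H: "\<forall>x\<in>{0..N-1}. (poly f (int x)) ^ (N - 1) mod int N \<in> {0, 1}"
  show "prime N"
  proof (rule ccontr)
    assume np: "\<not> prime N"
    then obtain p1 p2 where pp: "prime p1" "prime p2" "p1 \<noteq> p2" "p1 dvd N" "p2 dvd N"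
      using assms(2) by blast
    have N0: "N > 0" using assms(1) by (intro Nat.gr0I) auto
    define S where "S = {q. prime q \<and> q dvd N}"
    have finS: "finite S" 
    proof (rule finite_subset)
      show "S \<subseteq> {..N}" using N0 by (auto simp: S_def dvd_imp_le)
    qed simp
    define q where "q = Max S"
    have "q \<in> S" unfolding q_def using finS pp by (intro Max_in) (auto simp: S_def)
    then have q: "prime q" "q dvd N" unfolding S_def by auto
    obtain p where p: "prime p" "p dvd N" "p \<noteq> q" using pp by metis
    have cpq: "coprime p q" using p q by (simp add: primes_coprime)
    have pqN: "p * q dvd N" using cpq p q by (simp add: divides_mult)
    have "\<not> int q dvd lead_coeff f"
    proof
      assume "int q dvd lead_coeff f"
      moreover have "int q dvd int N" using q by simp
      ultimately have "int q dvd gcd (lead_coeff f) (int N)" by simp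
      then show False using assms(5) q(1) by (simp add: prime_ge_2_nat)
    qed
    then have "card {r\<in>{0..<q}. int q dvd poly f (int r)} \<le> degree f"
      using roots_mod_card q(1) by blast
    also have "\<dots> < q" using assms(4) unfolding S_def[symmetric] q_def .
    finally have lt: "card {r\<in>{0..<q}. int q dvd poly f (int r)} < q" .
    have "\<exists>r<q. \<not> int q dvd poly f (int r)"
    proof (rule ccontr)
      assume "\<not> ?thesis"
      then have "{r\<in>{0..<q}. int q dvd poly f (int r)} = {0..<q}" by auto
      with lt show False by simp
    qed
    then obtain r where r: "r < q" "\<not> int q dvd poly f (int r)" by blast
    obtain x0 where x0: "[x0 = nat (b mod int p)] (mod p)" "[x0 = r] (mod q)"
      using binary_chinese_remainder_nat[OF cpq] by blast
    define x where "x = x0 mod (p * q)"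
    have "p * q > 0" using p q by (simp add: prime_gt_0_nat)
    then have "x < p * q" unfolding x_def by simp
    moreover have "p * q \<le> N" using pqN N0 by (simp add: dvd_imp_le)
    ultimately have xN: "x \<in> {0..N-1}" by auto
    have "[x = x0] (mod p)" unfolding x_def by (simp add: cong_def mod_mod_cancel)
    then have "[x = nat (b mod int p)] (mod p)" using x0 cong_trans by blast
    then have "[int x = int (nat (b mod int p))] (mod int p)" using cong_int_iff by blast
    moreover have "int (nat (b mod int p)) = b mod int p" using p by (simp add: prime_gt_0_nat)
    ultimately have "[int x = b] (mod int p)" by (simp add: cong_def)
    then have c1: "[poly f (int x) = poly f b] (mod int p)" by (rule poly_cong_int)
    have pdy: "int p dvd poly f (int x)" using assms(3) p(2)
      by (simp add: cong_dvd_iff[OF c1])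
    have "[x = x0] (mod q)" unfolding x_def by (metis cong_def mod_mod_cancel dvd_triv_right)
    then have "[x = r] (mod q)" using x0 cong_trans by blast
    then have "[int x = int r] (mod int q)" using cong_int_iff by blast
    then have c2: "[poly f (int x) = poly f (int r)] (mod int q)" by (rule poly_cong_int)
    have nqy: "\<not> int q dvd poly f (int x)" using r(2) by (simp add: cong_dvd_iff[OF c2])
    have N1: "N - 1 \<ge> 1" proof -
      have "2 * 2 \<le> p * q" using p(1) q(1) prime_ge_2_nat by (intro mult_le_mono) auto
      then show ?thesis using \<open>p * q \<le> N\<close> by linarith
    qed
    define y where "y = poly f (int x)"
    have "y ^ (N - 1) mod int N \<in> {0, 1}" using H xN unfolding y_def by blast
    then show False
    proof
      assume "y ^ (N - 1) mod int N = 0"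
      then have "int N dvd y ^ (N - 1)" by auto
      then have "int q dvd y ^ (N - 1)" using q(2) by (meson dvd_trans of_nat_dvd_iff)
      moreover have "prime (int q)" using q(1) by simp
      ultimately have "int q dvd y" using prime_dvd_power by blast
      then show False using nqy y_def by simp
    next
      assume "y ^ (N - 1) mod int N \<in> {1}"
      then have "[y ^ (N - 1) = 1] (mod int N)" using N1 by (simp add: cong_def)
      then have "[y ^ (N - 1) = 1] (mod int p)" using p(2) by (meson cong_dvd_modulus of_nat_dvd_iff)
      moreover have "int p dvd y ^ (N - 1)" using N1 dvd_trans[OF pdy[folded y_def] dvd_power[of "N - 1" y]] by linarith
      ultimately have "int p dvd 1" using cong_dvd_iff by blast
      then show False using p(1) by (simp add: prime_ge_2_nat)
    qed
  qed
qed

end
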